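(* Let $n\ge1$, $1\le i\le n$ be integers, $\alpha,\beta>0$, $\tau\ge0$ with $i\beta(\tau+1)>\tau$. Then $$\xi^{(i)}_\tau(\alpha)=\int_0^\infty\frac{\partial}{\partial\alpha}\log f^{(i)}_{\alpha,\beta}(x)\, f^{(i)}_{\alpha,\beta}(x)^{\tau+1}\,dx=c(i,n)^{\tau+1}\left(\frac{\beta}{\alpha}\right)^{\tau+1}B\!\left(\frac{(n-i+1)\tau\beta+(n-i+1)\beta+\tau}{\beta},\frac{i\tau\beta+i\beta-\tau}{\beta}\right)\left(\frac{-\tau}{\beta+\tau\beta}\right),$$ and $K^{(i)}_\tau(\alpha)=J^{(i)}_{2\tau}(\alpha)-\xi^{(i)}_\tau(\alpha)^2$.
   Context: $c(i,n)=\frac{n!}{(n-i)!(i-1)!}$ and $f^{(i)}_{\alpha,\beta}(x)=\frac{c(i,n)\beta (x/\alpha)^{i\beta-1}}{\alpha(1+(x/\alpha)^\beta)^{n+1}}$, $x>0$, is the density of the $i$-th order statistic of a sample of size $n$ from the log-logistic distribution with scale $\alpha$ and shape $\beta$. Derivatives are with respect to $\alpha$ with $\beta$ known. $J^{(i)}_\tau(\alpha)=\int_0^\infty(\partial_\alpha\log f^{(i)}_{\alpha,\beta})^2 (f^{(i)}_{\alpha,\beta})^{\tau+1}dx$, and $K^{(i)}_\tau(\alpha)$ denotes the quantity $J^{(i)}_{2\tau}(\alpha)-\xi^{(i)}_\tau(\alpha)^2$. $B$ is the Beta function. *)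

theory Defs
  imports "HOL-Analysis.Analysis"
begin

definition cst :: "nat \<Rightarrow> nat \<Rightarrow> real" where
  "cst i n = fact n / (fact (n - i) * fact (i - 1))"

text \<open>Density of the i-th order statistic of a log-logistic sample of size n,
  scale alpha, shape beta, for x > 0.\<close>
definition fos :: "nat \<Rightarrow> nat \<Rightarrow> real \<Rightarrow> real \<Rightarrow> real \<Rightarrow> real" where
  "fos i n \<alpha> \<beta> x =
     cst i n * \<beta> * (x / \<alpha>) powr (real i * \<beta> - 1)
     / (\<alpha> * (1 + (x / \<alpha>) powr \<beta>) ^ (n + 1))"

definition score :: "nat \<Rightarrow> nat \<Rightarrow> real \<Rightarrow> real \<Rightarrow> real \<Rightarrow> real" where
  "score i n \<alpha> \<beta> x = deriv (\<lambda>a. ln (fos i n a \<beta> x)) \<alpha>"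

definition xi :: "nat \<Rightarrow> nat \<Rightarrow> real \<Rightarrow> real \<Rightarrow> real \<Rightarrow> real" where
  "xi i n \<tau> \<alpha> \<beta> =
     (LINT x:{0<..}|lborel. score i n \<alpha> \<beta> x * fos i n \<alpha> \<beta> x powr (\<tau> + 1))"

definition J :: "nat \<Rightarrow> nat \<Rightarrow> real \<Rightarrow> real \<Rightarrow> real \<Rightarrow> real" where
  "J i n \<tau> \<alpha> \<beta> =
     (LINT x:{0<..}|lborel. (score i n \<alpha> \<beta> x)\<^sup>2 * fos i n \<alpha> \<beta> x powr (\<tau> + 1))"

definition K :: "nat \<Rightarrow> nat \<Rightarrow> real \<Rightarrow> real \<Rightarrow> real \<Rightarrow> real" where
  "K i n \<tau> \<alpha> \<beta> = J i n (2 * \<tau>) \<alpha> \<beta> - (xi i n \<tau> \<alpha> \<beta>)\<^sup>2"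

end

theory Submission
  imports Defs
begin

lemma pe: "(y::real) > 0 \<Longrightarrow> y powr r = exp (r * ln y)" by (simp add: powr_def)

lemma powr_ident:
  fixes u \<beta> a b E1 E2 :: real
  assumes u: "u > 0" and e1: "\<beta> * a - 1 = E1" and e2: "a + b = E2"
  shows "u powr E1 / (1 + u powr \<beta>) powr E2 =
     u powr (\<beta> - 1) / (1 + u powr \<beta>)^2 * (u powr \<beta> / (1 + u powr \<beta>)) powr (a - 1)
      * (1 - u powr \<beta> / (1 + u powr \<beta>)) powr (b - 1)"
proof -
  define L where "L = ln u"
  define M where "M = ln (1 + u powr \<beta>)"
  have pT: "1 + u powr \<beta> > 0" by (simp add: add_pos_nonneg)
  have T: "u powr \<beta> = exp (\<beta> * L)" using u by (simp add: powr_def L_def)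
  have h1: "u powr E1 = exp (E1 * L)" using u by (simp add: powr_def L_def)
  have h2: "(1 + u powr \<beta>) powr E2 = exp (E2 * M)" using pT by (simp add: powr_def M_def)
  have h3: "u powr (\<beta> - 1) = exp ((\<beta> - 1) * L)" using u by (simp add: powr_def L_def)
  have h4: "(1 + u powr \<beta>)^2 = exp (2 * M)" using pT
  proof -
    have "exp (2 * M) = exp M * exp M" by (subst mult_2) (rule exp_add)
    thus ?thesis using pT by (simp add: M_def power2_eq_square)
  qed
  have h5: "(u powr \<beta> / (1 + u powr \<beta>)) powr (a - 1) = exp ((a - 1) * (\<beta> * L - M))"
  proof -
    have "u powr \<beta> / (1 + u powr \<beta>) > 0" using u pT by simp
    moreover have "ln (u powr \<beta> / (1 + u powr \<beta>)) = \<beta> * L - M"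
      using u pT by (simp add: ln_divide_pos L_def M_def)
    ultimately show ?thesis by (simp add: pe)
  qed
  have h6: "(1 - u powr \<beta> / (1 + u powr \<beta>)) powr (b - 1) = exp ((b - 1) * (- M))"
  proof -
    have e: "1 - u powr \<beta> / (1 + u powr \<beta>) = 1 / (1 + u powr \<beta>)" using pT by (simp add: field_simps)
    have "ln (1 / (1 + u powr \<beta>)) = - M" using pT by (simp add: ln_div M_def)
    thus ?thesis unfolding e using pT by (simp add: pe)
  qed
  have e2M: "exp (M * 2) = exp M * exp M" by (subst mult_2_right) (rule exp_add)
  have prod: "exp ((\<beta> - 1) * L - 2 * M + (a - 1) * (\<beta> * L - M) + (b - 1) * (- M)) =
        exp ((\<beta> - 1) * L) / exp (2 * M) * exp ((a - 1) * (\<beta> * L - M)) * exp ((b - 1) * (- M))"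
    by (simp only: exp_add exp_diff)
  have ex: "(\<beta> - 1) * L - 2 * M + (a - 1) * (\<beta> * L - M) + (b - 1) * (- M) = E1 * L - E2 * M"
    unfolding e1[symmetric] e2[symmetric] by (simp add: algebra_simps)
  have "u powr E1 / (1 + u powr \<beta>) powr E2 = exp (E1 * L - E2 * M)"
    unfolding h1 h2 by (simp add: exp_diff)
  also have "\<dots> = exp ((\<beta> - 1) * L - 2 * M + (a - 1) * (\<beta> * L - M) + (b - 1) * (- M))"
    by (simp only: ex)
  also note prod
  finally show ?thesis unfolding h3 h4 h5 h6 .
qed
lemma cst_pos: "cst i n > 0"
  unfolding cst_def by simp

lemma score_eq:
  fixes \<alpha> \<beta> x :: real
  assumes a: "\<alpha> > 0" and b: "\<beta> > 0" and x: "x > 0"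
  shows "score i n \<alpha> \<beta> x =
     (- (real i * \<beta>) + real (n+1) * \<beta> * ((x/\<alpha>) powr \<beta> / (1 + (x/\<alpha>) powr \<beta>))) / \<alpha>"
proof -
  define L where "L = (\<lambda>a::real. ln (cst i n) + ln \<beta> + (real i * \<beta> - 1) * (ln x - ln a) - ln a
      - real (n+1) * ln (1 + (x/a) powr \<beta>))"
  have eq: "ln (fos i n a \<beta> x) = L a" if "a \<in> {0<..}" for a
  proof -
    have ap: "a > 0" using that by simp
    have p1: "1 + (x/a) powr \<beta> > 0" by (simp add: add_pos_nonneg)
    have pc: "cst i n > 0" by (rule cst_pos)
    have "ln (fos i n a \<beta> x) = ln (cst i n * \<beta> * (x / a) powr (real i * \<beta> - 1))
        - ln (a * (1 + (x / a) powr \<beta>) ^ (n + 1))"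
      unfolding fos_def using ap p1 pc b x by (intro ln_divide_pos mult_pos_pos zero_less_power) auto
    also have "ln (cst i n * \<beta> * (x / a) powr (real i * \<beta> - 1)) =
       ln (cst i n) + ln \<beta> + (real i * \<beta> - 1) * (ln x - ln a)"
      using ap pc b x by (simp add: ln_mult_pos ln_divide_pos)
    also have "ln (a * (1 + (x / a) powr \<beta>) ^ (n + 1)) = ln a + real (n+1) * ln (1 + (x / a) powr \<beta>)"
      using ap p1 by (simp add: ln_mult_pos ln_realpow distrib_right del: power_Suc)
    finally show ?thesis unfolding L_def by simp
  qed
  have pT: "1 + (x/\<alpha>) powr \<beta> > 0" by (simp add: add_pos_nonneg)
  have d: "(L has_real_derivative
     (- (real i * \<beta>) + real (n+1) * \<beta> * ((x/\<alpha>) powr \<beta> / (1 + (x/\<alpha>) powr \<beta>))) / \<alpha>) (at \<alpha>)"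
    unfolding L_def using a b x pT
    apply -
    apply (rule derivative_eq_intros refl | simp add: add_pos_nonneg)+
    apply (simp add: powr_diff)
    apply (insert pT)
    apply (simp add: field_simps)
    apply (simp add: divide_simps)
    apply (simp add: algebra_simps)
    apply (metis distrib_left mult_1_right mult_pos_pos less_irrefl)
    done
  have d2: "((\<lambda>a. ln (fos i n a \<beta> x)) has_real_derivative
     (- (real i * \<beta>) + real (n+1) * \<beta> * ((x/\<alpha>) powr \<beta> / (1 + (x/\<alpha>) powr \<beta>))) / \<alpha>) (at \<alpha>)"
    by (rule has_field_derivative_transform_within_open[OF d, of "{0<..}"]) (use a eq in auto)
  show ?thesis unfolding score_def by (rule DERIV_imp_deriv[OF d2])
qed
lemma fos_powr:
  fixes \<alpha> \<beta> x \<tau> :: real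
  assumes a: "\<alpha> > 0" and b: "\<beta> > 0" and x: "x > 0"
  shows "fos i n \<alpha> \<beta> x powr (\<tau>+1) = (cst i n * \<beta> / \<alpha>) powr (\<tau>+1)
     * (x/\<alpha>) powr ((real i * \<beta> - 1) * (\<tau>+1))
     / (1 + (x/\<alpha>) powr \<beta>) powr (real (n+1) * (\<tau>+1))"
proof -
  define T where "T = (x/\<alpha>) powr \<beta>"
  have pT: "1 + T > 0" unfolding T_def by (simp add: add_pos_nonneg)
  have pc: "cst i n > 0" by (rule cst_pos)
  have "fos i n \<alpha> \<beta> x = (cst i n * \<beta> / \<alpha>) * (x/\<alpha>) powr (real i * \<beta> - 1) / (1 + T) powr (real (n+1))"
    unfolding fos_def T_def[symmetric] using powr_realpow[OF pT, of "n+1"] by simp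
  hence "fos i n \<alpha> \<beta> x powr (\<tau>+1) = (cst i n * \<beta> / \<alpha>) powr (\<tau>+1) * ((x/\<alpha>) powr (real i * \<beta> - 1)) powr (\<tau>+1)
       / ((1 + T) powr (real (n+1))) powr (\<tau>+1)"
    using pc a b x pT by (simp add: powr_mult powr_divide)
  also have "\<dots> = (cst i n * \<beta> / \<alpha>) powr (\<tau>+1) * (x/\<alpha>) powr ((real i * \<beta> - 1) * (\<tau>+1))
       / (1 + T) powr (real (n+1) * (\<tau>+1))"
    by (simp add: powr_powr)
  finally show ?thesis unfolding T_def .
qed

theorem theorem5:
  fixes n i :: nat and \<alpha> \<beta> \<tau> :: real
  assumes "n \<ge> 1" and "1 \<le> i" and "i \<le> n"
    and "\<alpha> > 0" and "\<beta> > 0" and "\<tau> \<ge> 0"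
    and "real i * \<beta> * (\<tau> + 1) > \<tau>"
  shows "set_integrable lborel {0<..}
           (\<lambda>x. score i n \<alpha> \<beta> x * fos i n \<alpha> \<beta> x powr (\<tau> + 1))
       \<and> xi i n \<tau> \<alpha> \<beta> =
           cst i n powr (\<tau> + 1) * (\<beta> / \<alpha>) powr (\<tau> + 1)
           * Beta ((real (n - i + 1) * \<tau> * \<beta> + real (n - i + 1) * \<beta> + \<tau>) / \<beta>)
                  ((real i * \<tau> * \<beta> + real i * \<beta> - \<tau>) / \<beta>)
           * (- \<tau> / (\<beta> + \<tau> * \<beta>))
       \<and> K i n \<tau> \<alpha> \<beta> = J i n (2 * \<tau>) \<alpha> \<beta> - (xi i n \<tau> \<alpha> \<beta>)\<^sup>2"
proof -
  note asm = assms
  have al: "\<alpha> > 0" and be: "\<beta> > 0" and ta: "\<tau> \<ge> 0" using assms by auto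
  define c where "c = cst i n"
  have cp: "c > 0" unfolding c_def by (rule cst_pos)
  define C1 where "C1 = (c * \<beta> / \<alpha>) powr (\<tau>+1)"
  define K0 where "K0 = C1 / \<beta>"
  define a where "a = (real i * \<tau> * \<beta> + real i * \<beta> - \<tau>) / \<beta>"
  define b where "b = (real (n - i + 1) * \<tau> * \<beta> + real (n - i + 1) * \<beta> + \<tau>) / \<beta>"
  have nat1: "real (n - i + 1) = real n - real i + 1" using assms by (simp add: of_nat_diff)
  have apos: "a > 0" unfolding a_def using assms by (simp add: algebra_simps)
  have bpos: "b > 0"
  proof -
    have "real (n - i + 1) * \<tau> * \<beta> \<ge> 0" using assms by simp
    moreover have "real (n - i + 1) * \<beta> > 0" using assms by simp
    ultimately show ?thesis unfolding b_def using assms by (intro divide_pos_pos) linarith+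
  qed
  have e1: "\<beta> * a - 1 = (real i * \<beta> - 1) * (\<tau>+1)" unfolding a_def using be by (simp add: field_simps)
  have e2: "a + b = real (n+1) * (\<tau>+1)" unfolding a_def b_def nat1 using be by (simp add: field_simps)
  have pT: "1 + (x/\<alpha>) powr \<beta> > 0" for x by (simp add: add_pos_nonneg)
  define G where "G = (\<lambda>x::real. (x/\<alpha>) powr \<beta> / (1 + (x/\<alpha>) powr \<beta>))"
  define G' where "G' = (\<lambda>x::real. \<beta> * (x/\<alpha>) powr (\<beta> - 1) / \<alpha> / (1 + (x/\<alpha>) powr \<beta>)^2)"
  define H where "H = (\<lambda>s::real. K0 * (- (real i * \<beta>) + real (n+1) * \<beta> * s) * (s powr (a - 1) * (1 - s) powr (b - 1)))"
  have G'pos: "G' x > 0" if "x > 0" for x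
  proof -
    have "1 + (x/\<alpha>) powr \<beta> > 0" by (simp add: add_pos_nonneg)
    thus ?thesis unfolding G'_def using that al be by (intro divide_pos_pos mult_pos_pos) auto
  qed
  have step1: "score i n \<alpha> \<beta> x * fos i n \<alpha> \<beta> x powr (\<tau> + 1) = \<bar>G' x\<bar> * H (G x)" if x: "x > 0" for x
  proof -
    have u: "x / \<alpha> > 0" using x al by simp
    have "fos i n \<alpha> \<beta> x powr (\<tau> + 1) = C1 * ((x/\<alpha>) powr ((real i * \<beta> - 1) * (\<tau>+1))
       / (1 + (x/\<alpha>) powr \<beta>) powr (real (n+1) * (\<tau>+1)))"
      unfolding C1_def c_def using fos_powr[OF al be x, of i n \<tau>] by simp
    also have "\<dots> = C1 * ((x/\<alpha>) powr (\<beta> - 1) / (1 + (x/\<alpha>) powr \<beta>)^2 * G x powr (a - 1) * (1 - G x) powr (b - 1))"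
      unfolding G_def by (subst powr_ident[OF u e1 e2]) simp
    finally have f: "fos i n \<alpha> \<beta> x powr (\<tau> + 1) = \<dots>" .
    have s: "score i n \<alpha> \<beta> x = (- (real i * \<beta>) + real (n+1) * \<beta> * G x) / \<alpha>"
      unfolding G_def by (rule score_eq[OF al be x])
    have ab: "\<bar>G' x\<bar> = G' x" using G'pos[OF x] by simp
    show ?thesis
      unfolding f s ab using G'pos[OF x] be al pT[of x] unfolding H_def K0_def G'_def
      by (simp add: field_simps)
  qed
  have derG: "(G has_field_derivative G' x) (at x within {0<..})" if x: "x > 0" for x
  proof -
    have u: "x / \<alpha> > 0" using x al by simp
    have "(G has_field_derivative G' x) (at x)"
      unfolding G_def G'_def using u al be pT[of x]
      apply -
      apply (rule derivative_eq_intros refl | simp)+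
      apply (simp add: field_simps power2_eq_square)
      done
    thus ?thesis by (rule has_field_derivative_at_within)
  qed
  have Ginv: "\<alpha> * (G x / (1 - G x)) powr (1/\<beta>) = x" if x: "x > 0" for x
  proof -
    have u: "x / \<alpha> > 0" using x al by simp
    have "G x / (1 - G x) = (x/\<alpha>) powr \<beta>" unfolding G_def using pT[of x] by (simp add: field_simps)
    hence "(G x / (1 - G x)) powr (1/\<beta>) = x / \<alpha>" using be u x al by (simp add: powr_powr)
    thus ?thesis using al by simp
  qed
  have injG: "inj_on G {0<..}"
    by (rule inj_on_inverseI[where g = "\<lambda>y. \<alpha> * (y / (1 - y)) powr (1/\<beta>)"]) (use Ginv in auto)
  have imG: "G ` {0<..} = {0<..<1}"
  proof
    show "G ` {0<..} \<subseteq> {0<..<1}"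
    proof
      fix y assume "y \<in> G ` {0<..}"
      then obtain x where x: "x > 0" and y: "y = G x" by auto
      have "(x/\<alpha>) powr \<beta> > 0" using x al by simp
      thus "y \<in> {0<..<1}" unfolding y G_def using pT[of x] by (simp add: field_simps)
    qed
  next
    show "{0<..<1} \<subseteq> G ` {0<..}"
    proof
      fix y :: real assume y: "y \<in> {0<..<1}"
      define x where "x = \<alpha> * (y / (1 - y)) powr (1/\<beta>)"
      have yp: "y / (1 - y) > 0" using y by simp
      have x: "x > 0" unfolding x_def using al yp by (intro mult_pos_pos) auto
      have "(x/\<alpha>) powr \<beta> = y / (1 - y)" unfolding x_def using al be yp y by (simp add: powr_powr)
      hence "G x = y" unfolding G_def using y pT[of x] by (simp add: divide_simps algebra_simps)
      thus "y \<in> G ` {0<..}" using x by force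
    qed
  qed
  define B1 where "B1 = (\<lambda>s::real. s powr (a - 1) * (1 - s) powr (b - 1))"
  define V where "V = K0 * (- (real i * \<beta>)) * Beta a b + K0 * (real (n+1) * \<beta>) * Beta (a+1) b"
  have hB1: "(B1 has_integral Beta a b) {0<..<1}"
    unfolding B1_def using has_integral_Beta_real[OF apos bpos] has_integral_Icc_iff_Ioo by blast
  have hB2: "((\<lambda>s. s * B1 s) has_integral Beta (a+1) b) {0<..<1}"
  proof -
    have "((\<lambda>t. t powr (a + 1 - 1) * (1 - t) powr (b - 1)) has_integral Beta (a+1) b) {0<..<1}"
      using has_integral_Beta_real[of "a+1" b] apos bpos has_integral_Icc_iff_Ioo by auto
    moreover have "t powr (a + 1 - 1) * (1 - t) powr (b - 1) = t * B1 t" if "t \<in> {0<..<1}" for t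
      using that powr_mult_base[of t "a - 1"] unfolding B1_def by simp
    ultimately show ?thesis using has_integral_cong by (metis (no_types, lifting))
  qed
  have hH: "(H has_integral V) {0<..<1}"
  proof -
    have "((\<lambda>s. K0 * (- (real i * \<beta>)) * B1 s + K0 * (real (n+1) * \<beta>) * (s * B1 s)) has_integral V) {0<..<1}"
      unfolding V_def by (intro has_integral_add has_integral_mult_right hB1 hB2)
    moreover have "K0 * (- (real i * \<beta>)) * B1 s + K0 * (real (n+1) * \<beta>) * (s * B1 s) = H s" for s
      unfolding H_def B1_def by (simp add: algebra_simps)
    ultimately show ?thesis by simp
  qed
  have B1nn: "B1 s \<ge> 0" for s unfolding B1_def by simp
  have aiH: "H absolutely_integrable_on {0<..<1}"
  proof (rule absolutely_integrable_integrable_bound)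
    show "H integrable_on {0<..<1}" using hH by blast
    show "(\<lambda>s. \<bar>K0\<bar> * (real i * \<beta> + real (n+1) * \<beta>) * B1 s) integrable_on {0<..<1}"
      using hB1 by (intro integrable_on_mult_right) blast
    fix s :: real assume s: "s \<in> {0<..<1}"
    have "\<bar>- (real i * \<beta>) + real (n+1) * \<beta> * s\<bar> \<le> real i * \<beta> + real (n+1) * \<beta>"
    proof -
      have "0 \<le> real (n+1) * \<beta> * s" "real (n+1) * \<beta> * s \<le> real (n+1) * \<beta>"
        using s be by (auto intro!: mult_left_le)
      moreover have "0 \<le> real i * \<beta>" using be by simp
      ultimately show ?thesis by linarith
    qed
    hence bd: "\<bar>K0\<bar> * \<bar>- (real i * \<beta>) + real (n+1) * \<beta> * s\<bar> * B1 s \<le> \<bar>K0\<bar> * (real i * \<beta> + real (n+1) * \<beta>) * B1 s"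
      using B1nn[of s] by (intro mult_right_mono mult_left_mono) auto
    thus "norm (H s) \<le> \<bar>K0\<bar> * (real i * \<beta> + real (n+1) * \<beta>) * B1 s"
    proof -
      have "H s = K0 * (- (real i * \<beta>) + real (n+1) * \<beta> * s) * B1 s" unfolding H_def B1_def by simp
      hence "norm (H s) = \<bar>K0\<bar> * \<bar>- (real i * \<beta>) + real (n+1) * \<beta> * s\<bar> * B1 s"
        using B1nn[of s] by (simp only: real_norm_def abs_mult abs_of_nonneg)
      thus ?thesis using bd by linarith
    qed
  qed
  have intH: "integral {0<..<1} H = V" using hH by (rule integral_unique)
  have cov: "(\<lambda>x. \<bar>G' x\<bar> * H (G x)) absolutely_integrable_on {0<..} \<and>
     integral {0<..} (\<lambda>x. \<bar>G' x\<bar> * H (G x)) = V"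
    using has_absolute_integral_change_of_variables_1'[of "{0<..}" G G' H V] derG injG imG aiH intH
    by auto
  define E where "E = (\<lambda>x. \<bar>G' x\<bar> * H (G x))"
  have meas: "(\<lambda>x. indicator {0<..} x *\<^sub>R E x) \<in> borel_measurable lborel"
    unfolding E_def G_def G'_def H_def by measurable
  have siE: "set_integrable lborel {0<..} E"
    using cov meas unfolding E_def set_integrable_def
    by (subst integrable_completion[symmetric]) auto
  have si: "set_integrable lborel {0<..} (\<lambda>x. score i n \<alpha> \<beta> x * fos i n \<alpha> \<beta> x powr (\<tau> + 1))"
    using siE by (subst set_integrable_cong[OF refl refl step1]) (auto simp: E_def)
  have "xi i n \<tau> \<alpha> \<beta> = integral {0<..} (\<lambda>x. score i n \<alpha> \<beta> x * fos i n \<alpha> \<beta> x powr (\<tau> + 1))"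
    unfolding xi_def by (rule set_borel_integral_eq_integral(2)[OF si])
  also have "\<dots> = integral {0<..} E" unfolding E_def by (rule integral_cong) (use step1 in auto)
  also have "\<dots> = V" using cov unfolding E_def by simp
  finally have xiV: "xi i n \<tau> \<alpha> \<beta> = V" .
  have anz: "a \<notin> \<int>\<^sub>\<le>\<^sub>0" using apos by auto
  have bp1: "(a + b) * Beta (a + 1) b = a * Beta a b" by (rule Beta_plus1_left[OF anz])
  have abpos: "a + b > 0" using apos bpos by simp
  have Ceq: "C1 = c powr (\<tau> + 1) * (\<beta> / \<alpha>) powr (\<tau> + 1)"
    unfolding C1_def using cp al be by (simp add: powr_mult[symmetric])
  have "V = K0 * Beta a b * (- (real i * \<beta>) + real (n+1) * \<beta> * a / (a + b))"
    unfolding V_def using bp1 abpos by (simp add: field_simps)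
  also have "\<dots> = C1 * Beta b a * (- \<tau> / (\<beta> + \<tau> * \<beta>))"
  proof -
    have "- (real i * \<beta>) + real (n+1) * \<beta> * a / (a + b) = \<beta> * (- \<tau> / (\<beta> + \<tau> * \<beta>))"
    proof -
      have n1: "real (n+1) > 0" by simp
      have t1: "\<tau> + 1 > 0" using ta by simp
      have "real (n+1) * \<beta> * a / (real (n+1) * (\<tau> + 1)) = \<beta> * a / (\<tau> + 1)"
        using n1 by simp
      also have "\<beta> * a = real i * \<beta> * (\<tau> + 1) - \<tau>" unfolding a_def using be by (simp add: field_simps)
      finally have q: "real (n+1) * \<beta> * a / (real (n+1) * (\<tau> + 1)) = (real i * \<beta> * (\<tau> + 1) - \<tau>) / (\<tau> + 1)" .
      have r: "\<beta> + \<tau> * \<beta> = \<beta> * (\<tau> + 1)" by (simp add: algebra_simps)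
      have bt: "\<beta> + \<beta> * \<tau> > 0" using be ta by (simp add: add_pos_nonneg)
      show ?thesis unfolding e2 q r using be t1 bt by (simp add: field_simps)
    qed
    thus ?thesis unfolding K0_def using be by (simp add: Beta_commute)
  qed
  finally have Vval: "V = C1 * Beta b a * (- \<tau> / (\<beta> + \<tau> * \<beta>))" .
  show ?thesis
    using si xiV Vval Ceq unfolding K_def a_def b_def c_def by simp
qed
end
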